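(* For all integers $s\ge k\ge 3$ there is a constant $C=C(k,s)>0$ such that for every integer $n\ge 2$, $$ f_{s,s+1}^{(k)}(n)\le C(\log n)^{1/(k-2)}. $$ Equivalently, for every $n\ge 2$ there is a $K_{s+1}^{(k)}$-free $k$-uniform hypergraph on $n$ vertices in which every set of at least $C(\log n)^{1/(k-2)}$ vertices contains a copy of $K_s^{(k)}$.
   Context: For integers $k\le s<t$ and $n\ge 0$, $f_{s,t}^{(k)}(n)$ is defined as $$ f_{s,t}^{(k)}(n)=\min_{\mathcal{G}} \max\{ |W| : W\subseteq V(\mathcal{G}) \text{ and the induced subhypergraph } \mathcal{G}[W] \text{ contains no copy of } K_s^{(k)}\}, $$ where the minimum is over all $k$-uniform hypergraphs $\mathcal{G}$ on $n$ vertices containing no copy of $K_t^{(k)}$, and $K_r^{(k)}$ denotes the complete $k$-uniform hypergraph on $r$ vertices. All logarithms are natural logarithms. *)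

theory Defs
  imports "HOL-Analysis.Analysis"
begin

definition uniform_hypergraph :: "nat \<Rightarrow> nat \<Rightarrow> nat set set \<Rightarrow> bool" where
  "uniform_hypergraph k n E \<longleftrightarrow> (\<forall>e\<in>E. e \<subseteq> {..<n} \<and> card e = k)"

definition has_clique :: "nat \<Rightarrow> nat set set \<Rightarrow> nat \<Rightarrow> nat set \<Rightarrow> bool" where
  "has_clique k E r W \<longleftrightarrow>
     (\<exists>S. S \<subseteq> W \<and> finite S \<and> card S = r \<and> (\<forall>e. e \<subseteq> S \<and> card e = k \<longrightarrow> e \<in> E))"

definition free_number :: "nat \<Rightarrow> nat \<Rightarrow> nat \<Rightarrow> nat set set \<Rightarrow> nat" where
  "free_number k s n E = Max {card W | W. W \<subseteq> {..<n} \<and> \<not> has_clique k E s W}"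

definition f_ramsey :: "nat \<Rightarrow> nat \<Rightarrow> nat \<Rightarrow> nat \<Rightarrow> nat" where
  "f_ramsey k s t n = Min {free_number k s n E | E.
      uniform_hypergraph k n E \<and> \<not> has_clique k E t {..<n}}"

end

theory Submission
  imports Defs
begin


definition shadow :: "nat \<Rightarrow> nat set \<Rightarrow> nat set set" where
  "shadow j F = {f. f \<subseteq> F \<and> card f = j}"

definition edges_of :: "nat \<Rightarrow> nat \<Rightarrow> (nat set \<Rightarrow> nat) \<Rightarrow> nat set set" where
  "edges_of k n c = {e. e \<subseteq> {..<n} \<and> card e = k \<and>
      c (e - {Max e}) \<noteq> c (e - {Max (e - {Max e})})}"

lemma lower_part:
  fixes S :: "nat set"
  assumes "finite S"
  shows "j \<le> card S \<Longrightarrow> \<exists>P\<subseteq>S. card P = j \<and> (\<forall>x\<in>P. \<forall>y\<in>S-P. x<y)"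
proof (induction j)
  case 0
  then show ?case by auto
next
  case (Suc j)
  then obtain P where P: "P \<subseteq> S" "card P = j" "\<forall>x\<in>P. \<forall>y\<in>S-P. x<y" by auto
  have fP: "finite P" using P(1) assms finite_subset by blast
  have "card (S - P) = card S - j" using P fP by (simp add: card_Diff_subset)
  then have "card (S - P) > 0" using Suc.prems by simp
  then have ne: "S - P \<noteq> {}" by (metis card.empty less_irrefl)
  define z where "z = Min (S - P)"
  have z: "z \<in> S - P" unfolding z_def using ne assms by (intro Min_in) auto
  have zle: "\<forall>y\<in>S-P. z \<le> y" unfolding z_def using assms by auto
  show ?case
  proof (intro exI[of _ "insert z P"] conjI)
    show "insert z P \<subseteq> S" using z P by auto
    show "card (insert z P) = Suc j" using z fP P by auto
    show "\<forall>x\<in>insert z P. \<forall>y\<in>S - insert z P. x < y"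
    proof (intro ballI)
      fix x y assume x: "x \<in> insert z P" and y: "y \<in> S - insert z P"
      show "x < y"
      proof (cases "x = z")
        case True
        then show ?thesis using zle y by (metis DiffD1 DiffD2 DiffI insertCI le_neq_implies_less)
      next
        case False
        then show ?thesis using x y P(3) by auto
      qed
    qed
  qed
qed

lemma no_big_clique:
  assumes k3: "3 \<le> k" and ks: "k \<le> s"
    and chi: "c \<in> PiE {f. f \<subseteq> {..<n} \<and> card f = k-1} (\<lambda>_. {..<s-k+2})"
  shows "\<not> has_clique k (edges_of k n c) (s+1) {..<n}"
proof
  assume "has_clique k (edges_of k n c) (s+1) {..<n}"
  then obtain S where S: "S \<subseteq> {..<n}" "finite S" "card S = s+1"
    "\<forall>e. e \<subseteq> S \<and> card e = k \<longrightarrow> e \<in> edges_of k n c"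
    unfolding has_clique_def by auto
  obtain P where P: "P \<subseteq> S" "card P = k-2" "\<forall>x\<in>P. \<forall>y\<in>S-P. x<y"
  proof -
    have "k-2 \<le> card S" using S(3) ks by simp
    then show ?thesis using lower_part[OF S(2), of "k-2"] that by blast
  qed
  have fP: "finite P" using P(1) S(2) finite_subset by blast
  define R where "R = S - P"
  have cardR: "card R = s - k + 3" unfolding R_def using P fP S k3 ks by (simp add: card_Diff_subset)
  have key: "c (insert x P) \<noteq> c (insert y P)" if xy: "x \<in> R" "y \<in> R" "x < y" for x y
  proof -
    define e where "e = insert y (insert x P)"
    have xP: "x \<notin> P" "y \<notin> P" using xy R_def by auto
    have fe: "finite e" using fP e_def by auto
    have ce: "card e = k" unfolding e_def using xP fP P(2) xy k3 by auto
    have "e \<subseteq> S" unfolding e_def using xy R_def P by auto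
    then have "e \<in> edges_of k n c" using S(4) ce by auto
    then have ne: "c (e - {Max e}) \<noteq> c (e - {Max (e - {Max e})})" unfolding edges_of_def by auto
    have yP: "\<forall>z\<in>P. z < y" "\<forall>z\<in>P. z < x" using xy P(3) R_def by auto
    have "Max e = y"
      using fe xy yP unfolding e_def by (intro Max_eqI) (auto simp: less_imp_le)
    moreover have "e - {y} = insert x P" unfolding e_def using xP xy by auto
    moreover have "Max (insert x P) = x"
      using fP xy yP by (intro Max_eqI) (auto simp: less_imp_le)
    moreover have "e - {x} = insert y P" unfolding e_def using xP xy by auto
    ultimately show ?thesis using ne by simp
  qed
  have inj: "inj_on (\<lambda>x. c (insert x P)) R"
  proof (rule inj_onI)
    fix x y assume "x \<in> R" "y \<in> R" "c (insert x P) = c (insert y P)"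
    then show "x = y" using key by (metis linorder_neqE_nat)
  qed
  have img: "(\<lambda>x. c (insert x P)) ` R \<subseteq> {..<s-k+2}"
  proof
    fix v assume "v \<in> (\<lambda>x. c (insert x P)) ` R"
    then obtain x where x: "x \<in> R" "v = c (insert x P)" by auto
    have "insert x P \<subseteq> {..<n}" using x R_def P S by auto
    moreover have "card (insert x P) = k - 1" using x R_def fP P(2) k3 by auto
    ultimately show "v \<in> {..<s-k+2}" using chi x by (auto simp: PiE_iff)
  qed
  have "card R \<le> s - k + 2" using card_inj_on_le[OF inj img] by simp
  then show False using cardR by simp
qed



lemma clique_from_pattern:
  assumes k3: "3 \<le> k" and Fn: "F \<subseteq> {..<n}" and cF: "card F = s"
    and pat: "\<forall>f\<in>shadow (k-1) F. c f = card {y\<in>F. y < Max f} - (k-2)"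
  shows "has_clique k (edges_of k n c) s F"
  unfolding has_clique_def
proof (intro exI[of _ F] conjI allI impI)
  have fF: "finite F" using Fn finite_subset by blast
  show "F \<subseteq> F" "finite F" "card F = s" using fF cF by auto
  fix e assume e: "e \<subseteq> F \<and> card e = k"
  have fe: "finite e" using e fF finite_subset by blast
  have nee: "e \<noteq> {}" using e k3 by auto
  define a where "a = Max e"
  have a: "a \<in> e" unfolding a_def using fe nee by simp
  define e1 where "e1 = e - {a}"
  have ce1: "card e1 = k-1" unfolding e1_def using a fe e by simp
  have ne1: "e1 \<noteq> {}" using ce1 k3 by auto
  have fe1: "finite e1" unfolding e1_def using fe by simp
  define b where "b = Max e1"
  have b: "b \<in> e1" unfolding b_def using fe1 ne1 by simp
  have ble: "\<forall>z\<in>e1. z \<le> b" unfolding b_def using fe1 by simp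
  have ba: "b < a"
  proof -
    have "b \<le> a" unfolding a_def using b fe e1_def by auto
    moreover have "b \<noteq> a" using b e1_def by auto
    ultimately show ?thesis by simp
  qed
  define e2 where "e2 = e - {b}"
  have ce2: "card e2 = k-1" unfolding e2_def using b e1_def fe e by simp
  have Me2: "Max e2 = a"
  proof (rule Max_eqI)
    show "finite e2" unfolding e2_def using fe by simp
    show "a \<in> e2" unfolding e2_def using a ba by simp
    fix y assume "y \<in> e2" then show "y \<le> a" unfolding e2_def a_def using fe by simp
  qed
  have "e1 \<subseteq> F" using e unfolding e1_def by auto
  then have sh1: "e1 \<in> shadow (k-1) F" unfolding shadow_def using ce1 by simp
  have "e2 \<subseteq> F" using e unfolding e2_def by auto
  then have sh2: "e2 \<in> shadow (k-1) F" unfolding shadow_def using ce2 by simp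
  have "c e1 = card {y\<in>F. y < Max e1} - (k-2)" using pat sh1 by blast
  then have c1: "c e1 = card {y\<in>F. y < b} - (k-2)" unfolding b_def .
  have "c e2 = card {y\<in>F. y < Max e2} - (k-2)" using pat sh2 by blast
  then have c2: "c e2 = card {y\<in>F. y < a} - (k-2)" unfolding Me2 .
  have sub: "e1 - {b} \<subseteq> {y\<in>F. y < b}"
  proof
    fix z assume z: "z \<in> e1 - {b}"
    then have "z \<le> b" "z \<noteq> b" "z \<in> F" using ble \<open>e1 \<subseteq> F\<close> by auto
    then show "z \<in> {y\<in>F. y < b}" by simp
  qed
  have "card (e1 - {b}) = k - 2" using ce1 b fe1 by simp
  moreover have "finite {y\<in>F. y < b}" using fF by simp
  ultimately have lb: "k - 2 \<le> card {y\<in>F. y < b}"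
    using card_mono[OF _ sub] by simp
  have "{y\<in>F. y < b} \<subset> {y\<in>F. y < a}"
    using ba b e e1_def by auto
  then have "card {y\<in>F. y < b} < card {y\<in>F. y < a}" using fF by (intro psubset_card_mono) auto
  then have "c e1 \<noteq> c e2" using c1 c2 lb by simp
  moreover have "e - {Max e} = e1" "e - {Max (e - {Max e})} = e2"
    unfolding e2_def e1_def b_def a_def by simp_all
  moreover have "e \<subseteq> {..<n}" using e Fn by auto
  ultimately show "e \<in> edges_of k n c"
    unfolding edges_of_def using e by simp
qed


lemma packing:
  fixes W :: "nat set"
  assumes fW: "finite W" and js: "j \<le> s"
  shows "\<exists>FF. FF \<subseteq> {F. F \<subseteq> W \<and> card F = s} \<and>
     (\<forall>F\<in>FF. \<forall>F'\<in>FF. F \<noteq> F' \<longrightarrow> shadow j F \<inter> shadow j F' = {}) \<and>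
     (card W choose s) \<le> card FF * (s choose j) * (card W choose (s - j))"
proof -
  define Q where "Q = {FF. FF \<subseteq> {F. F \<subseteq> W \<and> card F = s} \<and>
     (\<forall>F\<in>FF. \<forall>F'\<in>FF. F \<noteq> F' \<longrightarrow> shadow j F \<inter> shadow j F' = {})}"
  have "Q \<subseteq> Pow (Pow W)" unfolding Q_def by auto
  then have finQ: "finite Q" using fW finite_subset by blast
  have "{} \<in> Q" unfolding Q_def by auto
  then have neQ: "card ` Q \<noteq> {}" by auto
  have "Max (card ` Q) \<in> card ` Q" using finQ neQ by (intro Max_in) auto
  then obtain FF where FF: "FF \<in> Q" "card FF = Max (card ` Q)" by auto
  have FFmax: "card GG \<le> card FF" if "GG \<in> Q" for GG using FF(2) finQ that by simp
  have "FF \<subseteq> Pow W" using FF(1) unfolding Q_def by auto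
  then have finFF: "finite FF" using fW finite_subset by blast
  have cover: "\<exists>F\<in>FF. shadow j F \<inter> shadow j G \<noteq> {}" if G: "G \<subseteq> W" "card G = s" for G
  proof (rule ccontr)
    assume nc: "\<not> ?thesis"
    have fG: "finite G" using G fW finite_subset by blast
    obtain f where "f \<subseteq> G" "card f = j" using obtain_subset_with_card_n[of j G] G js by auto
    then have "f \<in> shadow j G" unfolding shadow_def by auto
    then have GnFF: "G \<notin> FF" using nc by auto
    have "insert G FF \<in> Q" unfolding Q_def
    proof (intro CollectI conjI ballI impI)
      show "insert G FF \<subseteq> {F. F \<subseteq> W \<and> card F = s}" using FF(1) G unfolding Q_def by auto
      fix F F' assume F: "F \<in> insert G FF" "F' \<in> insert G FF" "F \<noteq> F'"
      show "shadow j F \<inter> shadow j F' = {}"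
      proof (cases "F = G")
        case True
        then show ?thesis using F nc by blast
      next
        case False
        show ?thesis
        proof (cases "F' = G")
          case True
          then show ?thesis using F nc False by blast
        next
          case False':False
          then show ?thesis using F False FF(1) unfolding Q_def by auto
        qed
      qed
    qed
    then have "card (insert G FF) \<le> card FF" using FFmax by blast
    then show False using GnFF finFF by simp
  qed
  define Y where "Y = {X. X \<subseteq> W \<and> card X = s - j}"
  have cY: "card Y = card W choose (s - j)" unfolding Y_def using n_subsets[OF fW] by simp
  have subs: "{G. G \<subseteq> W \<and> card G = s} \<subseteq> (\<Union>F\<in>FF. \<Union>f\<in>shadow j F. (\<lambda>X. f \<union> X) ` Y)"
  proof
    fix G assume "G \<in> {G. G \<subseteq> W \<and> card G = s}"
    then have G: "G \<subseteq> W" "card G = s" by auto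
    have fG: "finite G" using G fW finite_subset by blast
    obtain F where F: "F \<in> FF" "shadow j F \<inter> shadow j G \<noteq> {}" using cover[OF G] by auto
    then obtain f where f: "f \<in> shadow j F" "f \<subseteq> G" "card f = j" unfolding shadow_def by auto
    have "finite f" using f fG finite_subset by blast
    then have "card (G - f) = s - j" using G f by (simp add: card_Diff_subset)
    then have "G - f \<in> Y" unfolding Y_def using G by auto
    moreover have "G = f \<union> (G - f)" using f by auto
    ultimately show "G \<in> (\<Union>F\<in>FF. \<Union>f\<in>shadow j F. (\<lambda>X. f \<union> X) ` Y)" using F f by blast
  qed
  have "card W choose s = card {G. G \<subseteq> W \<and> card G = s}" using n_subsets[OF fW] by simp
  also have "\<dots> \<le> card (\<Union>F\<in>FF. \<Union>f\<in>shadow j F. (\<lambda>X. f \<union> X) ` Y)"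
  proof (rule card_mono[OF _ subs])
    have "Y \<subseteq> Pow W" unfolding Y_def by auto
    then have fY: "finite Y" using fW finite_subset by blast
    have fs: "finite (shadow j F)" if "F \<in> FF" for F
    proof -
      have "F \<subseteq> W" using that FF(1) unfolding Q_def by auto
      then have "finite F" using fW finite_subset by blast
      moreover have "shadow j F \<subseteq> Pow F" unfolding shadow_def by auto
      ultimately show ?thesis using finite_subset by blast
    qed
    show "finite (\<Union>F\<in>FF. \<Union>f\<in>shadow j F. (\<lambda>X. f \<union> X) ` Y)"
      using finFF fs fY by (intro finite_UN_I) auto
  qed
  also have "\<dots> \<le> (\<Sum>F\<in>FF. card (\<Union>f\<in>shadow j F. (\<lambda>X. f \<union> X) ` Y))" by (rule card_UN_le[OF finFF])
  also have "\<dots> \<le> (\<Sum>F\<in>FF. (s choose j) * (card W choose (s - j)))"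
  proof (rule sum_mono)
    fix F assume F: "F \<in> FF"
    then have F': "F \<subseteq> W" "card F = s" using FF(1) unfolding Q_def by auto
    have fF: "finite F" using F' fW finite_subset by blast
    have cs: "card (shadow j F) = s choose j" unfolding shadow_def using n_subsets[OF fF] F' by simp
    have "shadow j F \<subseteq> Pow F" unfolding shadow_def by auto
    then have fs: "finite (shadow j F)" using fF finite_subset by blast
    have "Y \<subseteq> Pow W" unfolding Y_def by auto
    then have fY: "finite Y" using fW finite_subset by blast
    have "card (\<Union>f\<in>shadow j F. (\<lambda>X. f \<union> X) ` Y) \<le> (\<Sum>f\<in>shadow j F. card ((\<lambda>X. f \<union> X) ` Y))"
      by (rule card_UN_le[OF fs])
    also have "\<dots> \<le> (\<Sum>f\<in>shadow j F. card Y)"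
      by (intro sum_mono card_image_le fY)
    also have "\<dots> = (s choose j) * (card W choose (s - j))" using cs cY by simp
    finally show "card (\<Union>f\<in>shadow j F. (\<lambda>X. f \<union> X) ` Y) \<le> (s choose j) * (card W choose (s - j))" .
  qed
  also have "\<dots> = card FF * (s choose j) * (card W choose (s - j))" by simp
  finally have bound: "card W choose s \<le> card FF * (s choose j) * (card W choose (s - j))" .
  have "FF \<subseteq> {F. F \<subseteq> W \<and> card F = s}"
     "\<forall>F\<in>FF. \<forall>F'\<in>FF. F \<noteq> F' \<longrightarrow> shadow j F \<inter> shadow j F' = {}"
    using FF(1) unfolding Q_def by auto
  then show ?thesis using bound by blast
qed



lemma count_step:
  fixes D :: "'a set" and R :: "'b set" and Aj :: "'a set"
  assumes fD: "finite D" and fR: "finite R" and AjD: "Aj \<subseteq> D" and tj: "tj \<in> PiE Aj (\<lambda>_. R)"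
    and Sdep: "\<And>x y. x \<in> PiE D (\<lambda>_. R) \<Longrightarrow> y \<in> PiE D (\<lambda>_. R) \<Longrightarrow> (\<forall>f\<in>D - Aj. x f = y f) \<Longrightarrow> x \<in> S \<longleftrightarrow> y \<in> S"
    and SD: "S \<subseteq> PiE D (\<lambda>_. R)"
  shows "card S = card (PiE Aj (\<lambda>_. R)) * card {x\<in>S. \<forall>f\<in>Aj. x f = tj f}"
proof -
  define G where "G = {x\<in>S. \<forall>f\<in>Aj. x f = tj f}"
  define \<phi> where "\<phi> = (\<lambda>x. (restrict x Aj, (\<lambda>f. if f \<in> Aj then tj f else x f)))"
  define \<psi> where "\<psi> = (\<lambda>(h::'a\<Rightarrow>'b, x). (\<lambda>f. if f \<in> Aj then h f else x f))"
  have bij: "bij_betw \<phi> S (PiE Aj (\<lambda>_. R) \<times> G)"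
  proof (rule bij_betw_byWitness[where f'=\<psi>])
    show "\<forall>a\<in>S. \<psi> (\<phi> a) = a" unfolding \<phi>_def \<psi>_def by (auto simp: fun_eq_iff)
    show "\<forall>a'\<in>PiE Aj (\<lambda>_. R) \<times> G. \<phi> (\<psi> a') = a'"
    proof
      fix a' assume a': "a' \<in> PiE Aj (\<lambda>_. R) \<times> G"
      then obtain h x where hx: "a' = (h, x)" "h \<in> PiE Aj (\<lambda>_. R)" "x \<in> G" by auto
      have "restrict (\<lambda>f. if f \<in> Aj then h f else x f) Aj = h"
        using hx(2) by (auto simp: fun_eq_iff PiE_iff extensional_def)
      moreover have "(\<lambda>f. if f \<in> Aj then tj f else (if f \<in> Aj then h f else x f)) = x"
        using hx(3) unfolding G_def by (auto simp: fun_eq_iff)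
      moreover have "\<psi> a' = (\<lambda>f. if f \<in> Aj then h f else x f)" unfolding \<psi>_def hx(1) by simp
      ultimately show "\<phi> (\<psi> a') = a'" by (simp only: \<phi>_def hx(1))
    qed
    show "\<phi> ` S \<subseteq> PiE Aj (\<lambda>_. R) \<times> G"
    proof
      fix z assume "z \<in> \<phi> ` S"
      then obtain x where x: "x \<in> S" "z = \<phi> x" by auto
      have xP: "x \<in> PiE D (\<lambda>_. R)" using x SD by auto
      have r: "restrict x Aj \<in> PiE Aj (\<lambda>_. R)" using xP AjD by (auto simp: PiE_iff)
      define y where "y = (\<lambda>f. if f \<in> Aj then tj f else x f)"
      have yP: "y \<in> PiE D (\<lambda>_. R)" using xP tj AjD unfolding y_def by (auto simp: PiE_iff extensional_def)
      have "\<forall>f\<in>D - Aj. x f = y f" unfolding y_def by auto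
      then have "y \<in> S" using Sdep[OF xP yP] x(1) by blast
      moreover have "\<forall>f\<in>Aj. y f = tj f" unfolding y_def by auto
      ultimately have "y \<in> G" unfolding G_def by auto
      then show "z \<in> PiE Aj (\<lambda>_. R) \<times> G" using r x(2) unfolding \<phi>_def y_def by auto
    qed
    show "\<psi> ` (PiE Aj (\<lambda>_. R) \<times> G) \<subseteq> S"
    proof
      fix z assume "z \<in> \<psi> ` (PiE Aj (\<lambda>_. R) \<times> G)"
      then obtain h x where hx: "z = \<psi> (h, x)" "h \<in> PiE Aj (\<lambda>_. R)" "x \<in> G" by auto
      have xS: "x \<in> S" using hx(3) unfolding G_def by auto
      have xP: "x \<in> PiE D (\<lambda>_. R)" using xS SD by auto
      have zP: "z \<in> PiE D (\<lambda>_. R)" using xP hx(2) AjD unfolding hx(1) \<psi>_def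
        by (auto simp: PiE_iff extensional_def)
      have "\<forall>f\<in>D - Aj. x f = z f" unfolding hx(1) \<psi>_def by auto
      then show "z \<in> S" using Sdep[OF xP zP] xS by blast
    qed
  qed
  have "card S = card (PiE Aj (\<lambda>_. R) \<times> G)" using bij_betw_same_card[OF bij] .
  then show ?thesis unfolding G_def by (simp add: card_cartesian_product)
qed

lemma count_avoid:
  fixes D :: "'a set" and R :: "'b set" and A :: "'i \<Rightarrow> 'a set" and t :: "'i \<Rightarrow> 'a \<Rightarrow> 'b"
  assumes fD: "finite D" and fR: "finite R" and R0: "card R > 0" and fI: "finite I"
    and blocks: "\<forall>i\<in>I. A i \<subseteq> D \<and> card (A i) = b \<and> t i \<in> PiE (A i) (\<lambda>_. R)"
    and disj: "\<forall>i\<in>I. \<forall>j\<in>I. i \<noteq> j \<longrightarrow> A i \<inter> A j = {}"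
  shows "real (card {x \<in> PiE D (\<lambda>_. R). \<forall>i\<in>I. \<exists>f\<in>A i. x f \<noteq> t i f})
     = real (card R) ^ card D * (1 - 1 / real (card R) ^ b) ^ card I"
  using fI blocks disj
proof (induction I rule: finite_induct)
  case empty
  have "card (PiE D (\<lambda>_. R)) = card R ^ card D" using fD by (simp add: card_PiE)
  then show ?case by simp
next
  case (insert j I)
  define S where "S = {x \<in> PiE D (\<lambda>_. R). \<forall>i\<in>I. \<exists>f\<in>A i. x f \<noteq> t i f}"
  define G where "G = {x\<in>S. \<forall>f\<in>A j. x f = t j f}"
  have IH: "real (card S) = real (card R) ^ card D * (1 - 1 / real (card R) ^ b) ^ card I"
    unfolding S_def using insert by auto
  have Aj: "A j \<subseteq> D" "card (A j) = b" "t j \<in> PiE (A j) (\<lambda>_. R)" using insert.prems by auto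
  have Sdep: "x \<in> S \<longleftrightarrow> y \<in> S"
    if "x \<in> PiE D (\<lambda>_. R)" "y \<in> PiE D (\<lambda>_. R)" "\<forall>f\<in>D - A j. x f = y f" for x y
  proof -
    have "\<forall>i\<in>I. \<forall>f\<in>A i. x f = y f"
    proof (intro ballI)
      fix i f assume i: "i \<in> I" and f: "f \<in> A i"
      have "i \<noteq> j" using i insert.hyps by auto
      then have "A i \<inter> A j = {}" using insert.prems i by auto
      moreover have "A i \<subseteq> D" using insert.prems i by auto
      ultimately show "x f = y f" using that(3) f by auto
    qed
    then show ?thesis unfolding S_def using that by auto
  qed
  have cS: "card S = card (PiE (A j) (\<lambda>_. R)) * card G"
    unfolding G_def by (rule count_step[OF fD fR Aj(1) Aj(3) Sdep]) (auto simp: S_def)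
  have cP: "card (PiE (A j) (\<lambda>_. R)) = card R ^ b"
  proof -
    have "finite (A j)" using Aj(1) fD finite_subset by blast
    then show ?thesis using Aj(2) by (simp add: card_PiE)
  qed
  have "{x \<in> PiE D (\<lambda>_. R). \<forall>i\<in>insert j I. \<exists>f\<in>A i. x f \<noteq> t i f} = S - G"
    unfolding S_def G_def by auto
  moreover have "finite S" unfolding S_def using fD fR by (simp add: finite_PiE)
  moreover have "G \<subseteq> S" unfolding G_def by auto
  ultimately have "card {x \<in> PiE D (\<lambda>_. R). \<forall>i\<in>insert j I. \<exists>f\<in>A i. x f \<noteq> t i f} = card S - card G"
    by (simp add: card_Diff_subset finite_subset)
  moreover have "card G \<le> card S" using \<open>G \<subseteq> S\<close> \<open>finite S\<close> card_mono by blast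
  ultimately have e1: "real (card {x \<in> PiE D (\<lambda>_. R). \<forall>i\<in>insert j I. \<exists>f\<in>A i. x f \<noteq> t i f}) = real (card S) - real (card G)"
    by simp
  have rb: "real (card R) ^ b > 0" using R0 by simp
  have "real (card S) = real (card R) ^ b * real (card G)" using cS cP by simp
  then have "real (card G) = real (card S) / real (card R) ^ b" using rb by (simp add: field_simps)
  then have "real (card S) - real (card G) = real (card S) * (1 - 1 / real (card R) ^ b)"
    by (simp add: field_simps)
  then show ?case using e1 IH insert.hyps by simp
qed



lemma has_clique_mono: "has_clique k E s F \<Longrightarrow> F \<subseteq> W \<Longrightarrow> has_clique k E s W"
  unfolding has_clique_def by blast

lemma N_bound:
  fixes m N b s j :: nat
  assumes sm: "s \<le> m" and js: "j \<le> s" and m0: "0 < m" and s0: "0 < s"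
    and cnt: "m choose s \<le> N * b * (m choose (s - j))"
  shows "real m ^ j \<le> real s ^ s * real N * real b"
proof -
  have "(real m / real s) ^ s \<le> real (m choose s)" using binomial_ge_n_over_k_pow_k[OF sm] by simp
  also have "\<dots> \<le> real N * real b * real (m choose (s - j))" using cnt by (metis of_nat_le_iff of_nat_mult)
  also have "\<dots> \<le> real N * real b * real m ^ (s - j)"
  proof -
    have "m choose (s - j) \<le> m ^ (s - j)" using binomial_le_pow[of "s-j" m] sm by simp
    then have "real (m choose (s - j)) \<le> real m ^ (s - j)" by (metis of_nat_le_iff of_nat_power)
    then show ?thesis by (simp add: mult_left_mono)
  qed
  finally have h: "(real m / real s) ^ s \<le> real N * real b * real m ^ (s - j)" .
  have s0: "real s > 0" using s0 by simp
  have "(real m / real s) ^ s = real m ^ j * real m ^ (s - j) / real s ^ s"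
    using js by (simp add: power_divide power_add[symmetric])
  with h have "real m ^ j * real m ^ (s - j) \<le> real s ^ s * (real N * real b * real m ^ (s - j))"
    using s0 by (simp add: divide_le_eq mult.commute)
  then have "real m ^ (s - j) * real m ^ j \<le> real m ^ (s - j) * (real s ^ s * real N * real b)"
    by (simp add: algebra_simps)
  moreover have "real m ^ (s - j) > 0" using m0 by simp
  ultimately show ?thesis by simp
qed

lemma bad_bound:
  assumes k3: "3 \<le> k" and ks: "k \<le> s" and sm: "s \<le> card W" and Wn: "W \<subseteq> {..<n}"
  shows "real (card {x \<in> PiE {f. f \<subseteq> {..<n} \<and> card f = k-1} (\<lambda>_. {..<s-k+2}).
            \<not> has_clique k (edges_of k n x) s W})
       \<le> real (s-k+2) ^ card {f. f \<subseteq> {..<n} \<and> card f = k-1}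
          * exp (- (real (card W) ^ (k-1) / (real s ^ s * real (s choose (k-1)) * real (s-k+2) ^ (s choose (k-1)))))"
proof -
  define D where "D = {f. f \<subseteq> {..<n} \<and> card f = k-1}"
  define r where "r = s-k+2"
  define b where "b = s choose (k-1)"
  define m where "m = card W"
  have fW: "finite W" using finite_subset[OF Wn] by simp
  obtain FF where FF: "FF \<subseteq> {F. F \<subseteq> W \<and> card F = s}"
    and disj: "\<forall>F\<in>FF. \<forall>F'\<in>FF. F \<noteq> F' \<longrightarrow> shadow (k-1) F \<inter> shadow (k-1) F' = {}"
    and cnt: "m choose s \<le> card FF * b * (m choose (s - (k-1)))"
  proof -
    have "k-1 \<le> s" using ks by simp
    from packing[OF fW this] obtain FF where "FF \<subseteq> {F. F \<subseteq> W \<and> card F = s}"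
      "\<forall>F\<in>FF. \<forall>F'\<in>FF. F \<noteq> F' \<longrightarrow> shadow (k-1) F \<inter> shadow (k-1) F' = {}"
      "card W choose s \<le> card FF * (s choose (k-1)) * (card W choose (s - (k-1)))"
      by (elim exE conjE)
    then show ?thesis by (rule that[unfolded m_def b_def])
  qed
  define t where "t = (\<lambda>F. restrict (\<lambda>f. card {y\<in>F. y < Max f} - (k-2)) (shadow (k-1) F))"
  have "FF \<subseteq> Pow W" using FF by auto
  moreover have "finite (Pow W)" using fW by simp
  ultimately have fFF: "finite FF" by (rule finite_subset)
  have "D \<subseteq> Pow {..<n}" unfolding D_def by auto
  moreover have "finite (Pow {..<n})" by simp
  ultimately have fD: "finite D" by (rule finite_subset)
  have blocks: "\<forall>F\<in>FF. shadow (k-1) F \<subseteq> D \<and> card (shadow (k-1) F) = b \<and> t F \<in> PiE (shadow (k-1) F) (\<lambda>_. {..<r})"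
  proof
    fix F assume F: "F \<in> FF"
    then have FW: "F \<subseteq> W" "card F = s" using FF by auto
    have fF: "finite F" using FW fW finite_subset by blast
    have s1: "shadow (k-1) F \<subseteq> D" unfolding shadow_def D_def using FW Wn by auto
    have s2: "card (shadow (k-1) F) = b" unfolding shadow_def b_def using n_subsets[OF fF] FW by simp
    have s3: "t F \<in> PiE (shadow (k-1) F) (\<lambda>_. {..<r})"
    proof -
      have "card {y\<in>F. y < Max f} - (k-2) < r" if f: "f \<in> shadow (k-1) F" for f
      proof -
        have f': "f \<subseteq> F" "card f = k - 1" using f unfolding shadow_def by auto
        have ff: "finite f" using f' fF finite_subset by blast
        have "f \<noteq> {}" using f' k3 by auto
        then have "Max f \<in> f" using ff by (intro Max_in) auto
        then have "Max f \<in> F" using f' by auto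
        then have "{y\<in>F. y < Max f} \<subseteq> F - {Max f}" by auto
        then have "card {y\<in>F. y < Max f} \<le> card (F - {Max f})" using fF by (intro card_mono) auto
        also have "\<dots> = s - 1" using \<open>Max f \<in> F\<close> FW fF by simp
        finally show ?thesis unfolding r_def using ks k3 by linarith
      qed
      then show ?thesis unfolding t_def by (auto simp: PiE_iff)
    qed
    show "shadow (k-1) F \<subseteq> D \<and> card (shadow (k-1) F) = b \<and> t F \<in> PiE (shadow (k-1) F) (\<lambda>_. {..<r})"
      using s1 s2 s3 by blast
  qed
  have r0: "card {..<r} > 0" unfolding r_def using ks by simp
  have ca: "real (card {x \<in> PiE D (\<lambda>_. {..<r}). \<forall>F\<in>FF. \<exists>f\<in>shadow (k-1) F. x f \<noteq> t F f})
     = real (card {..<r}) ^ card D * (1 - 1 / real (card {..<r}) ^ b) ^ card FF"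
    by (rule count_avoid[OF fD finite_lessThan r0 fFF blocks disj])
  have sub: "{x \<in> PiE D (\<lambda>_. {..<r}). \<not> has_clique k (edges_of k n x) s W}
      \<subseteq> {x \<in> PiE D (\<lambda>_. {..<r}). \<forall>F\<in>FF. \<exists>f\<in>shadow (k-1) F. x f \<noteq> t F f}"
  proof (rule subsetI, rule ccontr)
    fix x assume x: "x \<in> {x \<in> PiE D (\<lambda>_. {..<r}). \<not> has_clique k (edges_of k n x) s W}"
      and nx: "x \<notin> {x \<in> PiE D (\<lambda>_. {..<r}). \<forall>F\<in>FF. \<exists>f\<in>shadow (k-1) F. x f \<noteq> t F f}"
    then obtain F where F: "F \<in> FF" "\<forall>f\<in>shadow (k-1) F. x f = t F f" by auto
    have FW: "F \<subseteq> W" "card F = s" using F FF by auto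
    have "\<forall>f\<in>shadow (k-1) F. x f = card {y\<in>F. y < Max f} - (k-2)" using F(2) unfolding t_def by auto
    then have "has_clique k (edges_of k n x) s F"
      using clique_from_pattern[OF k3, of F n s x] FW Wn by auto
    then have "has_clique k (edges_of k n x) s W" using has_clique_mono FW by blast
    then show False using x by auto
  qed
  have fin: "finite {x \<in> PiE D (\<lambda>_. {..<r}). \<forall>F\<in>FF. \<exists>f\<in>shadow (k-1) F. x f \<noteq> t F f}"
    using fD by (simp add: finite_PiE)
  have "real (card {x \<in> PiE D (\<lambda>_. {..<r}). \<not> has_clique k (edges_of k n x) s W})
     \<le> real (card {x \<in> PiE D (\<lambda>_. {..<r}). \<forall>F\<in>FF. \<exists>f\<in>shadow (k-1) F. x f \<noteq> t F f})"
    using card_mono[OF fin sub] by simp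
  also have "\<dots> = real r ^ card D * (1 - 1 / real r ^ b) ^ card FF" using ca by simp
  also have "\<dots> \<le> real r ^ card D * exp (- (real (card FF) / real r ^ b))"
  proof -
    have rb: "real r ^ b \<ge> 1" using r0 by simp
    have "(1 - 1 / real r ^ b) ^ card FF \<le> exp (- (1 / real r ^ b)) ^ card FF"
    proof (rule power_mono)
      show "1 - 1 / real r ^ b \<le> exp (- (1 / real r ^ b))"
        using exp_ge_add_one_self[of "- (1 / real r ^ b)"] by simp
      show "0 \<le> 1 - 1 / real r ^ b" using rb by (simp add: divide_le_eq)
    qed
    also have "\<dots> = exp (- (real (card FF) / real r ^ b))"
      by (simp add: exp_of_nat_mult[symmetric])
    finally show ?thesis by (simp add: mult_left_mono)
  qed
  also have "\<dots> \<le> real r ^ card D * exp (- (real m ^ (k-1) / (real s ^ s * real b * real r ^ b)))"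
  proof -
    have m0: "0 < m" using sm ks k3 unfolding m_def by simp
    have "real m ^ (k-1) \<le> real s ^ s * real (card FF) * real b"
      by (rule N_bound[OF _ _ m0 _ cnt]) (use sm ks k3 in \<open>auto simp: m_def\<close>)
    moreover have "real r ^ b > 0" using r0 by simp
    moreover have "real s ^ s * real b > 0" using ks k3 unfolding b_def by simp
    ultimately have "real m ^ (k-1) / (real s ^ s * real b) \<le> real (card FF)"
      by (simp add: divide_le_eq mult.commute mult.left_commute)
    then have "real m ^ (k-1) / (real s ^ s * real b) / real r ^ b \<le> real (card FF) / real r ^ b"
      using \<open>real r ^ b > 0\<close> by (intro divide_right_mono) auto
    then have "real m ^ (k-1) / (real s ^ s * real b * real r ^ b) \<le> real (card FF) / real r ^ b"
      by (simp add: divide_divide_eq_left)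
    then show ?thesis by (intro mult_left_mono) auto
  qed
  finally show ?thesis unfolding D_def r_def b_def m_def .
qed



lemma exists_good:
  assumes k3: "3 \<le> k" and ks: "k \<le> s" and sm: "s \<le> m"
    and ineq: "real n ^ m * exp (- (real m ^ (k-1) / (real s ^ s * real (s choose (k-1)) * real (s-k+2) ^ (s choose (k-1))))) < 1"
  shows "f_ramsey k s (s+1) n \<le> m"
proof -
  define D where "D = {f. f \<subseteq> {..<n} \<and> card f = k-1}"
  define r where "r = s-k+2"
  define Col where "Col = PiE D (\<lambda>_. {..<r})"
  define WW where "WW = {W. W \<subseteq> {..<n} \<and> card W = m}"
  define ex where "ex = exp (- (real m ^ (k-1) / (real s ^ s * real (s choose (k-1)) * real (s-k+2) ^ (s choose (k-1)))))"
  define Bad where "Bad = (\<Union>W\<in>WW. {x\<in>Col. \<not> has_clique k (edges_of k n x) s W})"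
  have "D \<subseteq> Pow {..<n}" unfolding D_def by auto
  moreover have "finite (Pow {..<n})" by simp
  ultimately have fD: "finite D" by (rule finite_subset)
  have fCol: "finite Col" unfolding Col_def using fD by (simp add: finite_PiE)
  have cCol: "card Col = r ^ card D" unfolding Col_def using fD by (simp add: card_PiE)
  have "WW \<subseteq> Pow {..<n}" unfolding WW_def by auto
  then have fWW: "finite WW" using finite_subset \<open>finite (Pow {..<n})\<close> by blast
  have cWW: "card WW = n choose m" unfolding WW_def using n_subsets[of "{..<n}" m] by simp
  have "real (card WW) \<le> real n ^ m"
  proof (cases "m \<le> n")
    case True
    then have "n choose m \<le> n ^ m" by (rule binomial_le_pow)
    then have "real (n choose m) \<le> real (n ^ m)" by (simp only: of_nat_le_iff)
    then show ?thesis using cWW by simp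
  next
    case False
    then show ?thesis using cWW by (simp add: binomial_eq_0)
  qed
  have "real (card Bad) \<le> (\<Sum>W\<in>WW. real (card {x\<in>Col. \<not> has_clique k (edges_of k n x) s W}))"
  proof -
    have "card Bad \<le> (\<Sum>W\<in>WW. card {x\<in>Col. \<not> has_clique k (edges_of k n x) s W})"
      unfolding Bad_def by (rule card_UN_le[OF fWW])
    then have "real (card Bad) \<le> real (\<Sum>W\<in>WW. card {x\<in>Col. \<not> has_clique k (edges_of k n x) s W})"
      by (simp only: of_nat_le_iff)
    then show ?thesis by (simp add: of_nat_sum)
  qed
  also have "\<dots> \<le> (\<Sum>W\<in>WW. real r ^ card D * ex)"
  proof (rule sum_mono)
    fix W assume "W \<in> WW"
    then have W: "W \<subseteq> {..<n}" "card W = m" unfolding WW_def by auto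
    show "real (card {x\<in>Col. \<not> has_clique k (edges_of k n x) s W}) \<le> real r ^ card D * ex"
      using bad_bound[OF k3 ks _ W(1)] W(2) sm unfolding Col_def D_def r_def ex_def by simp
  qed
  also have "\<dots> = real (card WW) * (real r ^ card D * ex)" by simp
  also have "\<dots> \<le> real n ^ m * (real r ^ card D * ex)"
    using \<open>real (card WW) \<le> real n ^ m\<close> unfolding ex_def by (intro mult_right_mono) auto
  also have "\<dots> = (real n ^ m * ex) * real r ^ card D" by simp
  also have "\<dots> < 1 * real r ^ card D"
  proof (rule mult_strict_right_mono)
    show "real n ^ m * ex < 1" using ineq unfolding ex_def .
    show "0 < real r ^ card D" unfolding r_def using ks by simp
  qed
  finally have "real (card Bad) < real (card Col)" using cCol by simp
  then have lt: "card Bad < card Col" by linarith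
  have "Bad \<subseteq> Col" unfolding Bad_def by auto
  then have fBad: "finite Bad" using fCol finite_subset by blast
  have "\<not> Col \<subseteq> Bad"
  proof
    assume "Col \<subseteq> Bad"
    then have "card Col \<le> card Bad" using fBad by (rule card_mono[rotated])
    then show False using lt by simp
  qed
  then obtain x where x: "x \<in> Col" "x \<notin> Bad" by blast
  define E where "E = edges_of k n x"
  have unif: "uniform_hypergraph k n E" unfolding uniform_hypergraph_def E_def edges_of_def by auto
  have noc: "\<not> has_clique k E (s+1) {..<n}"
    unfolding E_def using no_big_clique[OF k3 ks] x(1) unfolding Col_def D_def r_def by blast
  have good: "has_clique k E s W" if Wa: "W \<subseteq> {..<n}" "m \<le> card W" for W
  proof -
    obtain W' where W': "W' \<subseteq> W" "card W' = m" using obtain_subset_with_card_n[OF Wa(2)] by blast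
    then have "W' \<in> WW" unfolding WW_def using Wa by auto
    then have "has_clique k E s W'" using x unfolding Bad_def E_def by blast
    then show ?thesis using has_clique_mono W' by blast
  qed
  have fn: "free_number k s n E \<le> m"
    unfolding free_number_def
  proof (rule Max.boundedI)
    show "finite {card W |W. W \<subseteq> {..<n} \<and> \<not> has_clique k E s W}"
    proof (rule finite_subset[of _ "{..n}"])
      show "{card W |W. W \<subseteq> {..<n} \<and> \<not> has_clique k E s W} \<subseteq> {..n}"
      proof
        fix c assume "c \<in> {card W |W. W \<subseteq> {..<n} \<and> \<not> has_clique k E s W}"
        then obtain W where "c = card W" "W \<subseteq> {..<n}" by blast
        then have "c \<le> card {..<n}" using card_mono[of "{..<n}" W] by simp
        then show "c \<in> {..n}" by simp
      qed
    qed simp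
    have "\<not> has_clique k E s {}" unfolding has_clique_def using ks k3 by auto
    then show "{card W |W. W \<subseteq> {..<n} \<and> \<not> has_clique k E s W} \<noteq> {}" by blast
    fix c assume "c \<in> {card W |W. W \<subseteq> {..<n} \<and> \<not> has_clique k E s W}"
    then obtain W where W: "c = card W" "W \<subseteq> {..<n}" "\<not> has_clique k E s W" by blast
    then have "\<not> m \<le> card W" using good by blast
    then show "c \<le> m" using W by simp
  qed
  have "f_ramsey k s (s+1) n \<le> free_number k s n E"
    unfolding f_ramsey_def
  proof (rule Min_le)
    show "finite {free_number k s n E |E. uniform_hypergraph k n E \<and> \<not> has_clique k E (s + 1) {..<n}}"
    proof (rule finite_subset[of _ "free_number k s n ` Pow (Pow {..<n})"])
      show "{free_number k s n E |E. uniform_hypergraph k n E \<and> \<not> has_clique k E (s + 1) {..<n}}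
          \<subseteq> free_number k s n ` Pow (Pow {..<n})"
        unfolding uniform_hypergraph_def by blast
    qed simp
    show "free_number k s n E \<in> {free_number k s n E |E. uniform_hypergraph k n E \<and> \<not> has_clique k E (s + 1) {..<n}}"
      using unif noc by blast
  qed
  then show ?thesis using fn by simp
qed



lemma ge1_mult: "1 \<le> (x::real) \<Longrightarrow> 1 \<le> y \<Longrightarrow> 1 \<le> x * y"
  using mult_mono[of 1 x 1 y] by simp

theorem mainTheorem4:
  fixes k s :: nat
  assumes "3 \<le> k" and "k \<le> s"
  shows "\<exists>C::real. C > 0 \<and> (\<forall>n::nat. n \<ge> 2 \<longrightarrow>
           real (f_ramsey k s (s + 1) n) \<le> C * (ln (real n)) powr (1 / (real k - 2)))"
proof -
  note k3 = assms(1) and ks = assms(2)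
  define b where "b = s choose (k-1)"
  define r where "r = s-k+2"
  define K where "K = real s ^ s * real b * real r ^ b"
  define p where "p = 1 / (real k - 2)"
  define L2 where "L2 = ln (2::real)"
  define q where "q = min 1 L2"
  define A where "A = K + 1 / L2"
  define C where "C = A + (1 + real s) / q"
  have L2: "L2 > 0" unfolding L2_def by simp
  have q: "q > 0" "q \<le> 1" "q \<le> L2" unfolding q_def using L2 by auto
  have "1 \<le> real s ^ s" using ks k3 by simp
  moreover have "1 \<le> real b"
  proof -
    have "0 < b" unfolding b_def using ks by simp
    then show ?thesis by simp
  qed
  moreover have "1 \<le> real r ^ b" unfolding r_def using ks by simp
  ultimately have K1: "1 \<le> K" unfolding K_def by (intro ge1_mult) auto
  have A1: "1 \<le> A" unfolding A_def using K1 L2 by (simp add: add_increasing2)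
  have k2: "real (k - 2) = real k - 2" using k3 by simp
  have p: "0 < p" "p \<le> 1" "p * real (k-2) = 1" unfolding p_def using k3 k2 by auto
  show ?thesis
  proof (intro exI[of _ C] conjI allI impI)
    show "C > 0" unfolding C_def using A1 q by (simp add: add_pos_pos)
    fix n :: nat assume n2: "n \<ge> 2"
    define l where "l = ln (real n)"
    have lL: "L2 \<le> l" unfolding l_def L2_def using n2 by simp
    have l0: "0 < l" using lL L2 by simp
    define y where "y = K * l + 1"
    have y0: "0 < y" unfolding y_def using K1 l0 by (simp add: add_pos_nonneg)
    define m where "m = nat \<lceil>y powr p\<rceil> + s"
    have ypos: "0 \<le> y powr p" by simp
    have cm: "real (nat \<lceil>y powr p\<rceil>) = of_int \<lceil>y powr p\<rceil>" using ypos by simp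
    have m_lo: "y powr p \<le> real m" unfolding m_def using cm by (simp add: le_of_int_ceiling add_increasing2)
    have m_hi: "real m \<le> y powr p + 1 + real s" unfolding m_def using cm of_int_ceiling_le_add_one[of "y powr p"] by simp
    have m0: "0 < m" unfolding m_def using ks k3 by simp
    have pow: "y \<le> real m ^ (k-2)"
    proof -
      have "(y powr p) ^ (k-2) = (y powr p) powr real (k-2)" using y0 by (simp add: powr_realpow)
      also have "\<dots> = y" using p(3) k2 y0 by (simp add: powr_powr)
      finally have "y = (y powr p) ^ (k-2)" by simp
      also have "\<dots> \<le> real m ^ (k-2)" using m_lo by (intro power_mono) auto
      finally show ?thesis .
    qed
    have ineq: "real n ^ m * exp (- (real m ^ (k-1) / (real s ^ s * real (s choose (k-1)) * real (s-k+2) ^ (s choose (k-1))))) < 1"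
    proof -
      have en: "real n ^ m = exp (real m * l)" unfolding l_def using n2 by (simp add: exp_of_nat_mult)
      have "real m ^ (k-1) = real m * real m ^ (k-2)"
      proof -
        have "k - 1 = Suc (k - 2)" using k3 by simp
        then show ?thesis by simp
      qed
      moreover have "l < real m ^ (k-2) / K"
      proof -
        have "K * l < y" unfolding y_def by simp
        also have "\<dots> \<le> real m ^ (k-2)" by (rule pow)
        finally show ?thesis using K1 by (simp add: field_simps)
      qed
      moreover have "real m * l < real m * (real m ^ (k-2) / K)"
        using \<open>l < real m ^ (k-2) / K\<close> m0 by (intro mult_strict_left_mono) auto
      ultimately have "real m * l < real m ^ (k-1) / K" by simp
      then have "real m * l - real m ^ (k-1) / K < 0" by simp
      then have "exp (real m * l - real m ^ (k-1) / K) < 1" by simp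
      then show ?thesis unfolding en K_def b_def r_def by (simp add: exp_diff exp_minus field_simps)
    qed
    have fm: "f_ramsey k s (s+1) n \<le> m" by (rule exists_good[OF k3 ks _ ineq]) (simp add: m_def)
    have lp: "q \<le> l powr p"
    proof (cases "1 \<le> l")
      case True
      then have "1 \<le> l powr p" using p by (intro ge_one_powr_ge_zero) auto
      then show ?thesis using q by simp
    next
      case False
      then have "l powr 1 \<le> l powr p" using p l0 by (intro powr_mono') auto
      then show ?thesis using l0 lL q by simp
    qed
    have "y \<le> A * l"
    proof -
      have "1 \<le> l / L2" using lL L2 by simp
      then show ?thesis unfolding y_def A_def by (simp add: distrib_right)
    qed
    then have "y powr p \<le> (A * l) powr p" using y0 p by (intro powr_mono2) auto
    also have "\<dots> = A powr p * l powr p" using A1 l0 by (simp add: powr_mult)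
    also have "\<dots> \<le> A * l powr p"
    proof -
      have "A powr p \<le> A powr 1" using A1 p by (intro powr_mono) auto
      then have "A powr p \<le> A" using A1 by simp
      then show ?thesis by (intro mult_right_mono) auto
    qed
    finally have y1: "y powr p \<le> A * l powr p" .
    have "1 + real s = (1 + real s) / q * q" using q by simp
    also have "\<dots> \<le> (1 + real s) / q * l powr p" using lp q by (intro mult_left_mono) auto
    finally have y2: "1 + real s \<le> (1 + real s) / q * l powr p" .
    have "real (f_ramsey k s (s + 1) n) \<le> real m" using fm by simp
    also have "\<dots> \<le> A * l powr p + (1 + real s) / q * l powr p" using m_hi y1 y2 by simp
    also have "\<dots> = C * l powr p" unfolding C_def by (simp add: distrib_right)
    finally show "real (f_ramsey k s (s + 1) n) \<le> C * (ln (real n)) powr (1 / (real k - 2))"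
      unfolding l_def p_def .
  qed
qed


end
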